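(* Let $a>b\geq c>d>0$ and let $p,q$ be real numbers with $p,q\notin\{0,-1\}$. Then $$\frac{L_{p}^{p}(a,b)}{L_{p}^{p}(c,d)}\geq \frac{L_{q}^{q}(a,b)}{L_{q}^{q}(c,d)}\left(1+\frac{p-q}{q+1}\,\ln\frac{I(a^{q+1},b^{q+1})}{I(c^{q+1},d^{q+1})}\right),$$ with equality if and only if $p=q$. In particular, $$\exp\left(1-\frac{L(c,d)}{L(a,b)}\right)<\frac{I(a,b)}{I(c,d)}<\exp\left(\frac{L(a,b)}{L(c,d)}-1\right),$$ and for all $a>b>0$, $$\exp\left(1-\frac{b}{L(a,b)}\right)<\frac{I(a,b)}{b}<\exp\left(\frac{L(a,b)}{b}-1\right).$$
   Context: For $u,v>0$: the logarithmic mean is $L(u,v)=\frac{u-v}{\ln u-\ln v}$ if $u\neq v$ and $L(u,u)=u$; the identric mean is $I(u,v)=\frac{1}{e}\left(\frac{u^u}{v^v}\right)^{1/(u-v)}$ if $u\neq v$ and $I(u,u)=u$; for $p\neq 0,-1$ the $p$-logarithmic mean is $L_p(u,v)=\left(\frac{u^{p+1}-v^{p+1}}{(p+1)(u-v)}\right)^{1/p}$ if $u\neq v$ and $L_p(u,u)=u$. $L_p^p$ denotes the $p$-th power of $L_p$. *)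

theory Defs
  imports Complex_Main
begin

definition logmean :: "real \<Rightarrow> real \<Rightarrow> real" where
  "logmean u v = (if u = v then u else (u - v) / (ln u - ln v))"

definition identric :: "real \<Rightarrow> real \<Rightarrow> real" where
  "identric u v = (if u = v then u
     else (1 / exp 1) * ((u powr u) / (v powr v)) powr (1 / (u - v)))"

definition plogmean :: "real \<Rightarrow> real \<Rightarrow> real \<Rightarrow> real" where
  "plogmean p u v = (if u = v then u
     else ((u powr (p + 1) - v powr (p + 1)) / ((p + 1) * (u - v))) powr (1 / p))"

end

theory Submission
  imports Defs "HOL-Analysis.Analysis"
begin


definition EI :: "nat \<Rightarrow> real \<Rightarrow> real \<Rightarrow> real \<Rightarrow> real" where
  "EI k a b t = integral {a..b} (\<lambda>u. u ^ k * exp (t * u))"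

lemma EI_deriv: "(EI k a b has_real_derivative EI (Suc k) a b t) (at t)"
proof -
  have "((\<lambda>x. integral (cbox a b) (\<lambda>u. u ^ k * exp (x * u))) has_field_derivative
        integral (cbox a b) (\<lambda>u. u * (u ^ k * exp (t * u)))) (at t within UNIV)"
    by (rule leibniz_rule_field_derivative)
       (auto intro!: derivative_eq_intros integrable_continuous_interval continuous_intros
             simp: case_prod_beta)
  then show ?thesis unfolding EI_def fun_eq_iff cbox_interval
    by (simp add: algebra_simps)
qed

lemma EI_deriv_chain[derivative_intros]:
  "(f has_real_derivative f') (at x within S) \<Longrightarrow>
   ((\<lambda>x. EI k a b (f x)) has_real_derivative EI (Suc k) a b (f x) * f') (at x within S)"
  using DERIV_chain2[OF EI_deriv] by (metis has_field_derivative_at_within DERIV_chain2 EI_deriv)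




lemma tangent_strict:
  fixes P P1 P2 :: "real \<Rightarrow> real"
  assumes d1: "\<And>x. (P has_real_derivative P1 x) (at x)"
    and d2: "\<And>x. (P1 has_real_derivative P2 x) (at x)"
    and pos: "\<And>x. P2 x > 0" and ts: "t \<noteq> s"
  shows "P t > P s + P1 s * (t - s)"
proof -
  have mono: "P1 x < P1 y" if "x < y" for x y
  proof -
    obtain z where "x < z" "z < y" "P1 y - P1 x = (y - x) * P2 z"
      using MVT2[OF \<open>x < y\<close> d2] by blast
    with pos[of z] \<open>x < y\<close> mult_pos_pos[of "y-x" "P2 z"] show ?thesis by linarith
  qed
  show ?thesis
  proof (cases "s < t")
    case True
    obtain z where "s < z" "z < t" "P t - P s = (t - s) * P1 z"
      using MVT2[OF True d1] by blast
    moreover have "P1 s < P1 z" using mono \<open>s < z\<close> by blast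
    then have "(t - s) * P1 s < (t - s) * P1 z" using True by (simp add: mult_strict_left_mono)
    ultimately show ?thesis by (simp add: algebra_simps)
  next
    case False
    then have st: "t < s" using ts by simp
    obtain z where "t < z" "z < s" "P s - P t = (s - t) * P1 z"
      using MVT2[OF st d1] by blast
    moreover have "P1 z < P1 s" using mono \<open>z < s\<close> by blast
    then have "(s - t) * P1 z < (s - t) * P1 s" using st by (simp add: mult_strict_left_mono)
    ultimately show ?thesis by (simp add: algebra_simps)
  qed
qed

lemma integral_by_antideriv:
  assumes "a \<le> b" "\<And>u. (F has_real_derivative f u) (at u)"
  shows "integral {a..b} f = F b - F a"
proof -
  have "(f has_integral (F b - F a)) {a..b}"
    by (rule fundamental_theorem_of_calculus[OF assms(1)])
       (use assms(2) in \<open>auto simp: has_real_derivative_iff_has_vector_derivative[symmetric]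
              intro: has_field_derivative_at_within\<close>)
  then show ?thesis by (rule integral_unique)
qed

lemma EI0_closed: "a \<le> b \<Longrightarrow> t \<noteq> 0 \<Longrightarrow> EI 0 a b t = (exp (t*b) - exp (t*a)) / t"
  unfolding EI_def
  by (subst integral_by_antideriv[where F = "\<lambda>u. exp (t*u) / t"])
     (auto intro!: derivative_eq_intros simp: diff_divide_distrib)

lemma EI1_closed: "a \<le> b \<Longrightarrow> t \<noteq> 0 \<Longrightarrow>
   EI 1 a b t = exp (t*b) * (b/t - 1/t^2) - exp (t*a) * (a/t - 1/t^2)"
  unfolding EI_def
  by (subst integral_by_antideriv[where F = "\<lambda>u. exp (t*u) * (u/t - 1/t^2)"])
     (auto intro!: derivative_eq_intros simp: field_simps power2_eq_square)

lemma EI2_closed: "a \<le> b \<Longrightarrow> t \<noteq> 0 \<Longrightarrow>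
   EI 2 a b t = exp (t*b) * (b^2/t - 2*b/t^2 + 2/t^3) - exp (t*a) * (a^2/t - 2*a/t^2 + 2/t^3)"
  unfolding EI_def
  by (subst integral_by_antideriv[where F = "\<lambda>u. exp (t*u) * (u^2/t - 2*u/t^2 + 2/t^3)"])
     (auto intro!: derivative_eq_intros simp: field_simps power2_eq_square power3_eq_cube)

lemma EI_zero: "a \<le> b \<Longrightarrow> EI k a b 0 = (b^(k+1) - a^(k+1)) / (k+1)"
proof -
  assume ab: "a \<le> b"
  have d: "((\<lambda>u. u^(k+1) / real (k+1)) has_real_derivative u^k * exp (0*u)) (at u)" for u
  proof -
    have "((\<lambda>u. u^(k+1) / real (k+1)) has_real_derivative (real (k+1) * u^k) / real (k+1)) (at u)"
      using DERIV_cdivide[OF DERIV_pow[of "k+1" u], of "real (k+1)"] by simp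
    then show ?thesis by simp
  qed
  show ?thesis unfolding EI_def using integral_by_antideriv[OF ab d]
    by (simp add: diff_divide_distrib)
qed

lemma EI_pos_aux:
  assumes "a < b" "\<And>u. a < u \<Longrightarrow> u < b \<Longrightarrow> 0 < u ^ k * exp (t * u)"
  shows "0 < EI k a b t"
proof -
  have "integral {a..b} (\<lambda>_. 0::real) < integral {a..b} (\<lambda>u. u ^ k * exp (t * u))"
    by (rule integral_less_real) (use assms in \<open>auto intro!: continuous_intros\<close>)
  then show ?thesis by (simp add: EI_def)
qed

lemma EI_neg_aux:
  assumes "a < b" "\<And>u. a < u \<Longrightarrow> u < b \<Longrightarrow> u ^ k * exp (t * u) < 0"
  shows "EI k a b t < 0"
proof -
  have "integral {a..b} (\<lambda>u. u ^ k * exp (t * u)) < integral {a..b} (\<lambda>_. 0::real)"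
    by (rule integral_less_real) (use assms in \<open>auto intro!: continuous_intros\<close>)
  then show ?thesis by (simp add: EI_def)
qed

lemma EI0_pos: "a < b \<Longrightarrow> 0 < EI 0 a b t"
  by (rule EI_pos_aux) auto

lemma EI1_pos: "0 \<le> a \<Longrightarrow> a < b \<Longrightarrow> 0 < EI 1 a b t"
  by (rule EI_pos_aux) auto

lemma EI1_neg: "b \<le> 0 \<Longrightarrow> a < b \<Longrightarrow> EI 1 a b t < 0"
  by (rule EI_neg_aux) (auto simp: mult_neg_pos)

lemma EI2_pos: "0 \<le> a \<or> b \<le> 0 \<Longrightarrow> a < b \<Longrightarrow> 0 < EI 2 a b t"
  by (rule EI_pos_aux) auto

lemma one_plus_less_exp: "x \<noteq> 0 \<Longrightarrow> 1 + x < exp (x::real)"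
proof -
  assume x: "x \<noteq> 0"
  have e: "exp x = exp (x/2) ^ 2" by (simp add: power2_eq_square flip: exp_add)
  show ?thesis
  proof (cases "1 + x/2 \<ge> 0")
    case True
    have "(1 + x/2)^2 \<le> exp (x/2) ^ 2"
      by (rule power_mono) (use True exp_ge_add_one_self[of "x/2"] in auto)
    moreover have "0 < x * x" using x by (auto simp: zero_less_mult_iff linorder_neq_iff)
    then have "1 + x < (1 + x/2)^2" by (simp add: power2_eq_square field_simps)
    ultimately show ?thesis using e by simp
  next
    case False
    then have "1 + x < 0" by simp
    then show ?thesis using exp_gt_zero[of x] by linarith
  qed
qed

lemma kfun_sign: "(x::real) \<noteq> 0 \<Longrightarrow> 0 < x * ((x - 2) * exp x + x + 2)"
proof -
  assume x: "x \<noteq> 0"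
  define k where "k = (\<lambda>x::real. (x - 2) * exp x + x + 2)"
  define k' where "k' = (\<lambda>x::real. (x - 1) * exp x + 1)"
  have dk: "DERIV k y :> k' y" for y unfolding k_def k'_def
    by (auto intro!: derivative_eq_intros simp: algebra_simps)
  have k'pos: "0 < k' y" if "y \<noteq> 0" for y
  proof -
    have "1 + (-y) < exp (-y)" using one_plus_less_exp[of "-y"] that by simp
    then have "(1 - y) * exp y < exp (-y) * exp y"
      by (simp add: mult_strict_right_mono)
    then show ?thesis unfolding k'_def by (simp add: exp_minus field_simps)
  qed
  have k0: "k 0 = 0" unfolding k_def by simp
  show ?thesis
  proof (cases "x > 0")
    case True
    obtain z where "0 < z" "z < x" "k x - k 0 = (x - 0) * k' z"
      using MVT2[OF True, of k k'] dk by blast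
    then have "k x > 0" using k'pos[of z] True k0 by (simp add: mult_pos_pos)
    then show ?thesis using True unfolding k_def by simp
  next
    case False
    then have xn: "x < 0" using x by simp
    obtain z where "x < z" "z < 0" "k 0 - k x = (0 - x) * k' z"
      using MVT2[OF xn, of k k'] dk by blast
    then have "k x < 0" using k'pos[of z] xn k0 by (simp add: mult_neg_pos)
    then show ?thesis using xn unfolding k_def by (simp add: mult_neg_neg)
  qed
qed

lemma alg:
  fixes t e x :: real
  assumes "t \<noteq> 0" "e > 0"
  shows "2 * ((0/t - 1/t^2) - (1/e) * ((-(x/t))/t - 1/t^2))^2
     - ((1 - 1/e)/t) * ((0^2/t - 2*0/t^2 + 2/t^3) - (1/e) * ((-(x/t))^2/t - 2*(-(x/t))/t^2 + 2/t^3))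
   = x * ((x - 2) * e + x + 2) / (e^2 * t^4)"
  using assms by (simp add: field_simps power2_eq_square power3_eq_cube power4_eq_xxxx)

lemma G2_pos:
  assumes w: "w > 0"
  shows "0 < 2 * (EI 1 (-w) 0 t)^2 - EI 0 (-w) 0 t * EI 2 (-w) 0 t"
proof (cases "t = 0")
  case True
  have z0: "EI 0 (-w) 0 0 = w" using EI_zero[of "-w" 0 0] w by simp
  have z1: "EI 1 (-w) 0 0 = - (w^2 / 2)" using EI_zero[of "-w" 0 1] w by (simp add: power2_eq_square)
  have z2: "EI 2 (-w) 0 0 = w^3 / 3" using EI_zero[of "-w" 0 2] w by simp
  have id: "2 * (- (w^2 / 2))^2 - w * (w^3/3) = w^4 / 6" by (simp add: power2_eq_square power3_eq_cube power4_eq_xxxx)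
  have "0 < w^4 / 6" using w by simp
  then show ?thesis unfolding True z0 z1 z2 id .
next
  case False
  define x where "x = t * w"
  define e where "e = exp x"
  have x0: "x \<noteq> 0" using False w by (simp add: x_def)
  have e0: "e > 0" by (simp add: e_def)
  have em: "exp (t * - w) = 1 / e" by (simp add: e_def x_def exp_minus field_simps)
  have em2: "exp (- (t * w)) = 1 / e" by (simp add: e_def x_def exp_minus field_simps)
  have wx: "w = x / t" using False by (simp add: x_def)
  have w0: "-w \<le> 0" using w by simp
  have e1: "EI 0 (-w) 0 t = (1 - 1/e)/t" using EI0_closed[OF w0 False] by (simp add: em em2)
  have e2: "EI 1 (-w) 0 t = (0/t - 1/t^2) - (1/e) * ((-(x/t))/t - 1/t^2)"
    using EI1_closed[OF w0 False] by (simp add: em em2) (simp add: wx)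
  have e3: "EI 2 (-w) 0 t = (0^2/t - 2*0/t^2 + 2/t^3) - (1/e) * ((-(x/t))^2/t - 2*(-(x/t))/t^2 + 2/t^3)"
    using EI2_closed[OF w0 False] by (simp add: em em2) (simp add: wx)
  have "2 * (EI 1 (-w) 0 t)^2 - EI 0 (-w) 0 t * EI 2 (-w) 0 t
      = x * ((x - 2) * e + x + 2) / (e^2 * t^4)"
    unfolding e1 e2 e3 by (rule alg[OF False e0])
  also have "\<dots> > 0"
    using kfun_sign[OF x0] e0 False by (intro divide_pos_pos) (auto simp: e_def)
  finally show ?thesis .
qed




lemma abstract_tangent:
  fixes N0 N1 N2 M0 M1 M2 :: "real \<Rightarrow> real"
  assumes dN0: "\<And>x. (N0 has_real_derivative N1 x) (at x)"
    and dN1: "\<And>x. (N1 has_real_derivative N2 x) (at x)"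
    and dM0: "\<And>x. (M0 has_real_derivative M1 x) (at x)"
    and dM1: "\<And>x. (M1 has_real_derivative M2 x) (at x)"
    and sN0: "\<And>x. N0 x > 0" and sN1: "\<And>x. N1 x \<ge> 0" and sN2: "\<And>x. N2 x \<ge> 0"
    and sM0: "\<And>x. M0 x > 0" and sM1: "\<And>x. M1 x \<le> 0"
    and sG: "\<And>x. 2 * (M1 x)^2 - M0 x * M2 x \<ge> 0"
    and strict: "\<And>x. N2 x > 0 \<or> 2 * (M1 x)^2 - M0 x * M2 x > 0"
    and ts: "t \<noteq> s"
  shows "N0 t / M0 t > N0 s / M0 s + (N1 s * M0 s - N0 s * M1 s) / (M0 s)^2 * (t - s)"
proof -
  define P2 where "P2 x = N2 x / M0 x + 2 * N1 x * (- M1 x) / (M0 x)^2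
      + N0 x * (2 * (M1 x)^2 - M0 x * M2 x) / (M0 x)^3" for x
  have d1: "((\<lambda>x. N0 x / M0 x) has_real_derivative (N1 x * M0 x - N0 x * M1 x) / (M0 x)^2) (at x)" for x
    using sM0[of x]
    by (auto intro!: derivative_eq_intros dN0 dM0 simp: field_simps power2_eq_square)
  have d2: "((\<lambda>x. (N1 x * M0 x - N0 x * M1 x) / (M0 x)^2) has_real_derivative P2 x) (at x)" for x
    using sM0[of x]
    by (auto intro!: derivative_eq_intros dN0 dM0 dN1 dM1 simp: P2_def field_simps power2_eq_square power3_eq_cube)
  have p2: "P2 x > 0" for x
  proof -
    have m: "M0 x > 0" by (rule sM0)
    have t1: "N2 x / M0 x \<ge> 0" using sN2[of x] m by simp
    have "M1 x * N1 x \<le> 0" by (rule mult_nonpos_nonneg[OF sM1 sN1])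
    then have "2 * N1 x * (- M1 x) \<ge> 0" by (simp add: algebra_simps)
    then have t2: "2 * N1 x * (- M1 x) / (M0 x)^2 \<ge> 0" by (rule divide_nonneg_pos) (use m in simp)
    have t3: "N0 x * (2 * (M1 x)^2 - M0 x * M2 x) / (M0 x)^3 \<ge> 0"
      using sN0[of x] sG[of x] m by simp
    have "N2 x / M0 x > 0 \<or> N0 x * (2 * (M1 x)^2 - M0 x * M2 x) / (M0 x)^3 > 0"
      using strict[of x] sN0[of x] m by auto
    then show ?thesis unfolding P2_def using t1 t2 t3 by linarith
  qed
  show ?thesis
    using tangent_strict[where P = "\<lambda>x. N0 x / M0 x", OF d1 d2 p2 ts] by simp
qed



lemma alg2:
  fixes s ea eb ec ed A B C D :: real
  assumes s: "s \<noteq> 0" and ec: "ec > 0" and ab: "ea \<noteq> eb" and cd: "ec \<noteq> ed"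
  defines "N0 \<equiv> (ea/ec - eb/ec)/s"
  defines "M0 \<equiv> (1 - ed/ec)/s"
  defines "N1 \<equiv> (ea/ec)*((A-C)/s - 1/s^2) - (eb/ec)*((B-C)/s - 1/s^2)"
  defines "M1 \<equiv> 1*(0/s - 1/s^2) - (ed/ec)*((-(C-D))/s - 1/s^2)"
  shows "N0 / M0 = (ea - eb)/(ec - ed)"
    and "(N1 * M0 - N0 * M1) / M0^2 = (ea - eb)/(ec - ed) *
      ((ea*A - eb*B)/(ea-eb) - (ec*C - ed*D)/(ec-ed))"
proof -
  have ec0: "ec \<noteq> 0" using ec by simp
  have n0: "N0 \<noteq> 0" using s ab ec0 by (simp add: N0_def field_simps)
  have m0: "M0 \<noteq> 0" using s cd ec0 by (simp add: M0_def field_simps)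
  show q: "N0 / M0 = (ea - eb)/(ec - ed)"
    using s ec0 cd unfolding N0_def M0_def by (simp add: field_simps)
  have h1: "N1 / N0 = (ea*A - eb*B)/(ea-eb) - C - 1/s"
    using s ec0 ab unfolding N1_def N0_def by (simp add: field_simps power2_eq_square) (simp add: algebra_simps)?
  have h2: "M1 / M0 = (ec*C - ed*D)/(ec-ed) - C - 1/s"
    using s ec0 cd unfolding M1_def M0_def by (simp add: field_simps power2_eq_square) (simp add: algebra_simps)?
  have "(N1 * M0 - N0 * M1) / M0^2 = (N0 / M0) * (N1 / N0 - M1 / M0)"
    using n0 m0 by (simp add: field_simps power2_eq_square)
  also have "\<dots> = (ea - eb)/(ec - ed) * ((ea*A - eb*B)/(ea-eb) - (ec*C - ed*D)/(ec-ed))"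
    unfolding q h1 h2 by simp
  finally show "(N1 * M0 - N0 * M1) / M0^2 = (ea - eb)/(ec - ed) *
      ((ea*A - eb*B)/(ea-eb) - (ec*C - ed*D)/(ec-ed))" .
qed



lemma EI_d0: "(EI 0 a b has_real_derivative EI 1 a b x) (at x)"
  using EI_deriv[of 0 a b x] by simp
lemma EI_d1: "(EI 1 a b has_real_derivative EI 2 a b x) (at x)"
  using EI_deriv[of 1 a b x] by (simp add: numeral_2_eq_2)
lemma EI_d2: "(EI 2 a b has_real_derivative EI 3 a b x) (at x)"
  using EI_deriv[of 2 a b x] by (simp add: numeral_3_eq_3 numeral_2_eq_2)

lemma exp_ratio: "exp ((s::real) * (A - C)) = exp (s * A) / exp (s * C)"
proof -
  have "exp (s * (A - C)) = exp (s * A - s * C)" by (simp add: algebra_simps)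
  also have "\<dots> = exp (s * A) / exp (s * C)" by (rule exp_diff)
  finally show ?thesis .
qed

lemma main_tangent:
  fixes A B C D s t :: real
  assumes AB: "A > B" and BC: "B \<ge> C" and CD: "C > D" and s: "s \<noteq> 0" and ts: "t \<noteq> s"
  shows "(if t = 0 then (A-B)/(C-D) else (exp(t*A) - exp(t*B))/(exp(t*C) - exp(t*D)))
     > (exp(s*A) - exp(s*B))/(exp(s*C) - exp(s*D)) * (1 + (t - s) *
        ((exp(s*A)*A - exp(s*B)*B)/(exp(s*A)-exp(s*B)) - (exp(s*C)*C - exp(s*D)*D)/(exp(s*C)-exp(s*D))))"
proof -
  define \<alpha> where "\<alpha> = B - C"
  define \<beta> where "\<beta> = A - C"
  define w where "w = C - D"
  have w0: "w > 0" and a0: "0 \<le> \<alpha>" and ab: "\<alpha> < \<beta>" using assms by (auto simp: w_def \<alpha>_def \<beta>_def)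
  have mw: "-w \<le> 0" "-w < 0" using w0 by auto
  have key: "EI 0 \<alpha> \<beta> t / EI 0 (-w) 0 t > EI 0 \<alpha> \<beta> s / EI 0 (-w) 0 s
     + (EI 1 \<alpha> \<beta> s * EI 0 (-w) 0 s - EI 0 \<alpha> \<beta> s * EI 1 (-w) 0 s) / (EI 0 (-w) 0 s)^2 * (t - s)"
    by (rule abstract_tangent[OF EI_d0 EI_d1 EI_d0 EI_d1 EI0_pos[OF ab]
          less_imp_le[OF EI1_pos[OF a0 ab]] less_imp_le[OF EI2_pos[OF disjI1[OF a0] ab]]
          EI0_pos[OF mw(2)] less_imp_le[OF EI1_neg[OF order_refl mw(2)]]
          less_imp_le[OF G2_pos[OF w0]] disjI1[OF EI2_pos[OF disjI1[OF a0] ab]] ts])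
  have closed: "EI 0 \<alpha> \<beta> x / EI 0 (-w) 0 x = (exp(x*A) - exp(x*B))/(exp(x*C) - exp(x*D))
     \<and> (EI 1 \<alpha> \<beta> x * EI 0 (-w) 0 x - EI 0 \<alpha> \<beta> x * EI 1 (-w) 0 x) / (EI 0 (-w) 0 x)^2
     = (exp(x*A) - exp(x*B))/(exp(x*C) - exp(x*D)) *
        ((exp(x*A)*A - exp(x*B)*B)/(exp(x*A)-exp(x*B)) - (exp(x*C)*C - exp(x*D)*D)/(exp(x*C)-exp(x*D)))"
    if x: "x \<noteq> 0" for x
  proof -
    have e1: "exp (x * \<beta>) = exp (x*A) / exp (x*C)" unfolding \<beta>_def by (rule exp_ratio)
    have e2: "exp (x * \<alpha>) = exp (x*B) / exp (x*C)" unfolding \<alpha>_def by (rule exp_ratio)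
    have e3: "exp (x * - w) = exp (x*D) / exp (x*C)" unfolding w_def
      using exp_ratio[of x D C] by (simp add: algebra_simps)
    have e3': "exp (- (x * w)) = exp (x*D) / exp (x*C)" using e3 by simp
    have N0: "EI 0 \<alpha> \<beta> x = (exp (x*A) / exp (x*C) - exp (x*B) / exp (x*C)) / x"
      using EI0_closed[of \<alpha> \<beta> x] ab x by (simp add: e1 e2)
    have M0: "EI 0 (-w) 0 x = (1 - exp (x*D) / exp (x*C)) / x"
      using EI0_closed[of "-w" 0 x] mw x by (simp add: e3 e3')
    have N1: "EI 1 \<alpha> \<beta> x = (exp (x*A) / exp (x*C))*((A-C)/x - 1/x^2)
        - (exp (x*B) / exp (x*C))*((B-C)/x - 1/x^2)"
      using EI1_closed[of \<alpha> \<beta> x] ab x by (simp add: e1 e2) (simp add: \<alpha>_def \<beta>_def)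
    have M1: "EI 1 (-w) 0 x = 1*(0/x - 1/x^2) - (exp (x*D) / exp (x*C))*((-(C-D))/x - 1/x^2)"
      using EI1_closed[of "-w" 0 x] mw x by (simp add: e3 e3') (auto simp: w_def field_simps)
    have "x*A \<noteq> x*B" using x AB by simp
    then have ne1: "exp (x*A) \<noteq> exp (x*B)" by simp
    have "x*C \<noteq> x*D" using x CD by simp
    then have ne2: "exp (x*C) \<noteq> exp (x*D)" by simp
    show ?thesis unfolding N0 M0 N1 M1
      using alg2(1)[OF x exp_gt_zero ne1 ne2] alg2(2)[where A=A and B=B and C=C and D=D, OF x exp_gt_zero ne1 ne2] by simp
  qed
  have lhs: "EI 0 \<alpha> \<beta> t / EI 0 (-w) 0 t =
     (if t = 0 then (A-B)/(C-D) else (exp(t*A) - exp(t*B))/(exp(t*C) - exp(t*D)))"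
  proof (cases "t = 0")
    case True
    then show ?thesis using ab mw by (simp add: EI_zero \<alpha>_def \<beta>_def w_def)
  next
    case False
    then show ?thesis using closed[OF False] by simp
  qed
  have aux: "X * (1 + (t - s) * Y) = X + X * Y * (t - s)" for X Y :: real
    by (simp add: algebra_simps)
  from closed[OF s] have c1: "EI 0 \<alpha> \<beta> s / EI 0 (-w) 0 s = (exp(s*A) - exp(s*B))/(exp(s*C) - exp(s*D))"
    and c2: "(EI 1 \<alpha> \<beta> s * EI 0 (-w) 0 s - EI 0 \<alpha> \<beta> s * EI 1 (-w) 0 s) / (EI 0 (-w) 0 s)^2
     = (exp(s*A) - exp(s*B))/(exp(s*C) - exp(s*D)) *
        ((exp(s*A)*A - exp(s*B)*B)/(exp(s*A)-exp(s*B)) - (exp(s*C)*C - exp(s*D)*D)/(exp(s*C)-exp(s*D)))"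
    by blast+
  show ?thesis unfolding aux using key unfolding lhs c1 c2 .
qed




lemma EI_dc: "((\<lambda>_. c) has_real_derivative 0) (at x)" for c :: real
  by (rule DERIV_const)

lemma tangent_N1:
  fixes X :: real
  assumes X: "X > 0"
  shows "X > (exp X - 1) * (1 - (exp X * X / (exp X - 1) - 1))"
proof -
  have ab: "0 < X" using X by simp
  have key: "EI 0 0 X 0 / 1 > EI 0 0 X 1 / 1 + (EI 1 0 X 1 * 1 - EI 0 0 X 1 * 0) / 1^2 * (0 - 1)"
    by (rule abstract_tangent[of "EI 0 0 X" "EI 1 0 X" "EI 2 0 X" "\<lambda>_. 1" "\<lambda>_. 0" "\<lambda>_. 0",
          OF EI_d0 EI_d1 DERIV_const DERIV_const EI0_pos[OF ab]
          less_imp_le[OF EI1_pos[OF order_refl ab]] less_imp_le[OF EI2_pos[OF disjI1[OF order_refl] ab]]])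
       (auto intro: EI2_pos ab)
  have z: "EI 0 0 X 0 = X" using EI_zero[of 0 X 0] X by simp
  have c0: "EI 0 0 X 1 = exp X - 1" using EI0_closed[of 0 X 1] X by simp
  have c1: "EI 1 0 X 1 = exp X * (X - 1) + 1" using EI1_closed[of 0 X 1] X by simp
  have ne: "exp X - 1 \<noteq> 0" using X by simp
  have "(exp X - 1) * (1 - (exp X * X / (exp X - 1) - 1)) = (exp X - 1) - (exp X * (X - 1) + 1)"
    using ne by (simp add: field_simps)
  then show ?thesis using key unfolding z c0 c1 by simp
qed

lemma algG:
  fixes E w :: real
  assumes "E \<noteq> 0"
  shows "1/E + (0*E - 1*(-1 - (E+1)*(w-1)))/E^2*(0-(-1)) = 1/E*(1 + ((E+1)*w/E - 1))"
  using assms by (simp add: field_simps power2_eq_square)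

lemma tangent_G1:
  fixes w :: real
  assumes w: "w > 0"
  shows "1 / w > 1 / (exp w - 1) * (1 + (exp w * w / (exp w - 1) - 1))"
proof -
  have mw: "-w \<le> 0" "-w < 0" using w by auto
  have key: "1 / EI 0 (-w) 0 0 > 1 / EI 0 (-w) 0 (-1) + (0 * EI 0 (-w) 0 (-1) - 1 * EI 1 (-w) 0 (-1)) / (EI 0 (-w) 0 (-1))^2 * (0 - (-1))"
    by (rule abstract_tangent[of "\<lambda>_. 1" "\<lambda>_. 0" "\<lambda>_. 0" "EI 0 (-w) 0" "EI 1 (-w) 0" "EI 2 (-w) 0",
          OF DERIV_const DERIV_const EI_d0 EI_d1 _ _ _ 
          EI0_pos[OF mw(2)] less_imp_le[OF EI1_neg[OF order_refl mw(2)]]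
          less_imp_le[OF G2_pos[OF w]] disjI2[OF G2_pos[OF w]]])
       auto
  have z: "EI 0 (-w) 0 0 = w" using EI_zero[of "-w" 0 0] w by simp
  have c0: "EI 0 (-w) 0 (-1) = exp w - 1" using EI0_closed[of "-w" 0 "-1"] w by simp
  have c1: "EI 1 (-w) 0 (-1) = - 1 - exp w * (w - 1)" using EI1_closed[of "-w" 0 "-1"] w
    by (simp add: algebra_simps)
  have ne: "exp w - 1 \<noteq> 0" using w by simp
  have "1 / (exp w - 1) + (0 * (exp w - 1) - 1 * (- 1 - exp w * (w - 1))) / (exp w - 1)^2 * (0 - (-1))
     = 1 / (exp w - 1) * (1 + (exp w * w / (exp w - 1) - 1))"
    using algG[OF ne, of w] by simp
  then show ?thesis using key unfolding z c0 c1 by simp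
qed




lemma powr_exp: "0 < x \<Longrightarrow> x powr y = exp (y * ln x)" for x y :: real
  by (simp add: powr_def)

lemma ln_identric:
  fixes u v :: real
  assumes u: "0 < u" and v: "0 < v" and uv: "u \<noteq> v"
  shows "identric u v > 0 \<and> ln (identric u v) = (u * ln u - v * ln v) / (u - v) - 1"
proof -
  define Z where "Z = (u powr u) / (v powr v)"
  have Z: "Z > 0" using u v by (simp add: Z_def)
  have lnZ: "ln Z = u * ln u - v * ln v" using u v by (simp add: Z_def ln_div)
  have id: "identric u v = exp (1 / (u - v) * ln Z) / exp 1"
    using uv Z by (simp add: identric_def Z_def[symmetric] powr_exp)
  show ?thesis unfolding id
    by (simp add: ln_div lnZ field_simps)
qed

lemma quot_pos: "A > B \<Longrightarrow> t \<noteq> 0 \<Longrightarrow> (exp (t*A) - exp (t*B)) / t > 0" for A B t :: real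
  by (cases "t > 0") (auto simp: divide_pos_pos divide_neg_neg mult_less_cancel_left)

lemma plog_pow:
  fixes a b p :: real
  assumes ab: "a > b" "b > 0" and p: "p \<noteq> 0" "p \<noteq> -1"
  shows "plogmean p a b powr p = (exp ((p+1) * ln a) - exp ((p+1) * ln b)) / ((p+1) * (a - b))"
proof -
  define X where "X = (exp ((p+1) * ln a) - exp ((p+1) * ln b)) / ((p+1) * (a - b))"
  have "ln a > ln b" using ab by simp
  then have "(exp ((p+1) * ln a) - exp ((p+1) * ln b)) / (p+1) > 0"
    using quot_pos[of "ln b" "ln a" "p+1"] p by simp
  then have X: "X > 0" using ab unfolding X_def
    by (metis diff_gt_0_iff_gt divide_divide_eq_left divide_pos_pos mult.commute)
  have "plogmean p a b = X powr (1/p)"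
    using ab by (simp add: plogmean_def X_def powr_exp)
  then show ?thesis using X p by (simp add: powr_powr X_def[symmetric])
qed




lemma quot_alg:
  fixes T al be X Y :: real
  assumes "T \<noteq> 0" "al \<noteq> 0" "be \<noteq> 0" "Y \<noteq> 0"
  shows "(X / (T * al)) / (Y / (T * be)) = be / al * (X / Y)"
  using assms by (simp add: field_simps)

lemma R_alg:
  fixes u v w z s A B C D :: real
  assumes "u \<noteq> v" "w \<noteq> z"
  shows "((u * (s*A) - v * (s*B)) / (u - v) - 1) - ((w * (s*C) - z * (s*D)) / (w - z) - 1)
     = s * ((u * A - v * B) / (u - v) - (w * C - z * D) / (w - z))"
  using assms by (simp add: field_simps)

lemma part1:
  fixes a b c d p q :: real
  assumes ab: "a > b" and bc: "b \<ge> c" and cd: "c > d" and d: "d > 0"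
    and p: "p \<notin> {0, -1}" and q: "q \<notin> {0, -1}"
  shows "(let lhs = plogmean p a b powr p / plogmean p c d powr p;
                 rhs = plogmean q a b powr q / plogmean q c d powr q *
                   (1 + (p - q) / (q + 1) *
                     ln (identric (a powr (q + 1)) (b powr (q + 1)) /
                         identric (c powr (q + 1)) (d powr (q + 1))))
             in lhs \<ge> rhs \<and> (lhs = rhs \<longleftrightarrow> p = q))"
proof -
  have c0: "c > 0" and b0: "b > 0" and a0: "a > 0" using ab bc cd d by auto
  define A where "A = ln a"
  define B where "B = ln b"
  define C where "C = ln c"
  define D where "D = ln d"
  have AB: "A > B" and BC: "B \<ge> C" and CD: "C > D"
    using ab bc cd d c0 b0 by (auto simp: A_def B_def C_def D_def)
  define t where "t = p + 1"
  define s where "s = q + 1"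
  have t0: "t \<noteq> 0" and s0: "s \<noteq> 0" using p q by (auto simp: t_def s_def)
  define Q where "Q x = (exp (x*A) - exp (x*B)) / (exp (x*C) - exp (x*D))" for x
  define R where "R = (exp(s*A)*A - exp(s*B)*B)/(exp(s*A)-exp(s*B))
      - (exp(s*C)*C - exp(s*D)*D)/(exp(s*C)-exp(s*D))"
  define K where "K = (c - d) / (a - b)"
  have K: "K > 0" using ab cd by (simp add: K_def)
  have nz: "exp (x*C) - exp (x*D) \<noteq> 0" if "x \<noteq> 0" for x
  proof -
    have "x*C \<noteq> x*D" using that CD by simp
    then show ?thesis by simp
  qed
  have Lgen: "plogmean r a b powr r / plogmean r c d powr r = K * Q (r+1)"
    if r: "r \<noteq> 0" "r \<noteq> -1" for r
  proof -
    have r1: "r + 1 \<noteq> 0" using r by simp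
    have "plogmean r a b powr r / plogmean r c d powr r =
        ((exp ((r+1) * A) - exp ((r+1) * B)) / ((r+1) * (a - b))) /
        ((exp ((r+1) * C) - exp ((r+1) * D)) / ((r+1) * (c - d)))"
      using plog_pow[OF ab b0 r] plog_pow[OF cd d r] by (simp add: A_def B_def C_def D_def)
    also have "\<dots> = K * Q (r+1)"
      unfolding K_def Q_def by (rule quot_alg) (use r1 nz[OF r1] ab cd in auto)
    finally show ?thesis .
  qed
  have Lp: "plogmean p a b powr p / plogmean p c d powr p = K * Q t"
    using Lgen[of p] p by (simp add: t_def)
  have Lq: "plogmean q a b powr q / plogmean q c d powr q = K * Q s"
    using Lgen[of q] q by (simp add: s_def)
  have lnI: "ln (identric (a powr (q + 1)) (b powr (q + 1)) /
                 identric (c powr (q + 1)) (d powr (q + 1))) = s * R"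
  proof -
    have pw: "x powr (q+1) = exp (s * ln x)" if "x > 0" for x
      using that by (simp add: powr_exp s_def)
    have ne1: "exp (s*A) \<noteq> exp (s*B)" using s0 AB by simp
    have ne2: "exp (s*C) \<noteq> exp (s*D)" using s0 CD by simp
    note I1 = ln_identric[OF exp_gt_zero exp_gt_zero ne1]
    note I2 = ln_identric[OF exp_gt_zero exp_gt_zero ne2]
    have "ln (identric (exp (s*A)) (exp (s*B)) / identric (exp (s*C)) (exp (s*D)))
        = ln (identric (exp (s*A)) (exp (s*B))) - ln (identric (exp (s*C)) (exp (s*D)))"
      using I1 I2 by (simp add: ln_div)
    also have "\<dots> = s * R"
      unfolding I1[THEN conjunct2] I2[THEN conjunct2] R_def ln_exp by (rule R_alg[OF ne1 ne2])
    finally show ?thesis using a0 b0 c0 d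
      by (simp add: pw A_def B_def C_def D_def)
  qed
  have main: "Q t > Q s * (1 + (t - s) * R)" if "t \<noteq> s"
    using main_tangent[OF AB BC CD s0 that] t0 unfolding Q_def R_def by simp
  have rhs: "K * Q s * (1 + (p - q) / (q + 1) * (s * R)) = K * Q s * (1 + (t - s) * R)"
    using s0 by (simp add: t_def s_def field_simps)
  show ?thesis
    unfolding Let_def Lp Lq lnI rhs
  proof (cases "p = q")
    case True
    then show "K * Q s * (1 + (t - s) * R) \<le> K * Q t \<and> (K * Q t = K * Q s * (1 + (t - s) * R)) = (p = q)"
      by (simp add: t_def s_def)
  next
    case False
    then have ts: "t \<noteq> s" by (simp add: t_def s_def)
    have "K * (Q s * (1 + (t - s) * R)) < K * Q t"
      using main[OF ts] K by (simp add: mult_strict_left_mono)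
    then show "K * Q s * (1 + (t - s) * R) \<le> K * Q t \<and> (K * Q t = K * Q s * (1 + (t - s) * R)) = (p = q)"
      using False unfolding mult.assoc by linarith
  qed
qed




lemma part2:
  fixes a b c d :: real
  assumes ab: "a > b" and bc: "b \<ge> c" and cd: "c > d" and d: "d > 0"
  shows "exp (1 - logmean c d / logmean a b) < identric a b / identric c d \<and>
         identric a b / identric c d < exp (logmean a b / logmean c d - 1)"
proof -
  have c0: "c > 0" and b0: "b > 0" and a0: "a > 0" using ab bc cd d by auto
  define A where "A = ln a"
  define B where "B = ln b"
  define C where "C = ln c"
  define D where "D = ln d"
  have AB: "A > B" and BC: "B \<ge> C" and CD: "C > D"
    using ab bc cd d c0 b0 by (auto simp: A_def B_def C_def D_def)
  have ea: "exp A = a" "exp B = b" "exp C = c" "exp D = d"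
    using a0 b0 c0 d by (auto simp: A_def B_def C_def D_def)
  define \<phi> where "\<phi> = (a * A - b * B) / (a - b) - (c * C - d * D) / (c - d)"
  have I1: "identric a b > 0" "ln (identric a b) = (a * A - b * B) / (a - b) - 1"
    using ln_identric[OF a0 b0] ab by (auto simp: A_def B_def)
  have I2: "identric c d > 0" "ln (identric c d) = (c * C - d * D) / (c - d) - 1"
    using ln_identric[OF c0 d] cd by (auto simp: C_def D_def)
  have Iq: "identric a b / identric c d = exp \<phi>"
  proof -
    have "identric a b / identric c d = exp (ln (identric a b / identric c d))"
      using I1 I2 by simp
    also have "ln (identric a b / identric c d) = \<phi>"
      using I1 I2 by (simp add: ln_div \<phi>_def)
    finally show ?thesis .
  qed
  have Lab: "logmean a b = (a - b) / (A - B)" using ab by (simp add: logmean_def A_def B_def)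
  have Lcd: "logmean c d = (c - d) / (C - D)" using cd by (simp add: logmean_def C_def D_def)
  have low: "(A-B)/(C-D) > (a-b)/(c-d) * (1 + (0 - 1) * \<phi>)"
    using main_tangent[OF AB BC CD, of 1 0] by (simp add: ea \<phi>_def)
  have up0: "(-D - -C)/(-B - -A) > (exp(-1 * -D) - exp(-1 * -C))/(exp(-1 * -B) - exp(-1 * -A)) * (1 + (0 - -1) *
        ((exp(-1 * -D) * -D - exp(-1 * -C) * -C)/(exp(-1 * -D)-exp(-1 * -C))
          - (exp(-1 * -B) * -B - exp(-1 * -A) * -A)/(exp(-1 * -B)-exp(-1 * -A))))"
    using main_tangent[of "-C" "-D" "-B" "-A" "-1" 0] AB BC CD by simp
  have e1: "(exp(-1 * -D) - exp(-1 * -C))/(exp(-1 * -B) - exp(-1 * -A)) = (c - d)/(a - b)"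
    using ab cd by (simp add: ea field_simps)
  have e2: "(exp(-1 * -D) * -D - exp(-1 * -C) * -C)/(exp(-1 * -D)-exp(-1 * -C))
          - (exp(-1 * -B) * -B - exp(-1 * -A) * -A)/(exp(-1 * -B)-exp(-1 * -A)) = \<phi>"
  proof -
    have "(exp(-1 * -D) * -D - exp(-1 * -C) * -C)/(exp(-1 * -D)-exp(-1 * -C)) = (c * C - d * D) / (c - d) * (-1)"
      using cd by (simp add: ea field_simps)
    moreover have "(exp(-1 * -B) * -B - exp(-1 * -A) * -A)/(exp(-1 * -B)-exp(-1 * -A)) = (a * A - b * B) / (a - b) * (-1)"
      using ab by (simp add: ea field_simps)
    ultimately show ?thesis unfolding \<phi>_def by simp
  qed
  have up: "(C-D)/(A-B) > (c-d)/(a-b) * (1 + \<phi>)"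
    using up0 unfolding e1 e2 by simp
  have k1: "(a-b)/(c-d) > 0" "(c-d)/(a-b) > 0" using ab cd by auto
  have q1: "logmean c d / logmean a b = ((A-B)/(C-D)) / ((a-b)/(c-d))"
    unfolding Lab Lcd using AB CD ab cd by (simp add: field_simps)
  have q2: "logmean a b / logmean c d = ((C-D)/(A-B)) / ((c-d)/(a-b))"
    unfolding Lab Lcd using AB CD ab cd by (simp add: field_simps)
  have "1 - logmean c d / logmean a b < \<phi>"
  proof -
    have eq: "(a-b)/(c-d) * (1 + (0 - 1) * \<phi>) = (1 - \<phi>) * ((a-b)/(c-d))" by (simp add: algebra_simps)
    have "1 - \<phi> < ((A-B)/(C-D)) / ((a-b)/(c-d))"
      by (rule iffD2[OF pos_less_divide_eq[OF k1(1)]]) (use low in \<open>simp only: eq\<close>)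
    then show ?thesis unfolding q1 by linarith
  qed
  moreover have "\<phi> < logmean a b / logmean c d - 1"
  proof -
    have eq: "(c-d)/(a-b) * (1 + \<phi>) = (1 + \<phi>) * ((c-d)/(a-b))" by (simp add: algebra_simps)
    have "1 + \<phi> < ((C-D)/(A-B)) / ((c-d)/(a-b))"
      by (rule iffD2[OF pos_less_divide_eq[OF k1(2)]]) (use up in \<open>simp only: eq\<close>)
    then show ?thesis unfolding q2 by linarith
  qed
  ultimately show ?thesis unfolding Iq by simp
qed

lemma part3:
  fixes a b :: real
  assumes ab: "a > b" and b0: "b > 0"
  shows "exp (1 - b / logmean a b) < identric a b / b \<and>
         identric a b / b < exp (logmean a b / b - 1)"
proof -
  have a0: "a > 0" using ab b0 by simp
  define X where "X = ln a - ln b"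
  have X: "X > 0" using ab b0 by (simp add: X_def)
  have eX: "exp X = a / b" using a0 b0 by (simp add: X_def exp_diff)
  have x1: "exp X - 1 > 0" using X by simp
  define \<phi> where "\<phi> = exp X * X / (exp X - 1) - 1"
  have I1: "identric a b > 0" "ln (identric a b) = (a * ln a - b * ln b) / (a - b) - 1"
    using ln_identric[OF a0 b0] ab by auto
  have Iq: "identric a b / b = exp \<phi>"
  proof -
    have "identric a b / b = exp (ln (identric a b / b))"
      using I1 b0 by simp
    also have "ln (identric a b / b) = \<phi>"
    proof -
      have "ln (identric a b / b) = (a * ln a - b * ln b) / (a - b) - 1 - ln b"
        using I1 b0 by (simp add: ln_div)
      also have "\<dots> = a * X / (a - b) - 1"
        using ab by (simp add: X_def field_simps)
      also have "\<dots> = \<phi>"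
        unfolding \<phi>_def eX using ab b0 by (simp add: field_simps)
      finally show ?thesis .
    qed
    finally show ?thesis .
  qed
  have L: "logmean a b = (a - b) / X" using ab by (simp add: logmean_def X_def)
  have r1: "b / logmean a b = X / (exp X - 1)"
    unfolding L eX using ab b0 X by (simp add: field_simps)
  have r2: "logmean a b / b = (exp X - 1) / X"
    unfolding L eX using ab b0 X by (simp add: field_simps)
  have "1 - b / logmean a b < \<phi>"
  proof -
    have "X > (exp X - 1) * (1 - \<phi>)" using tangent_N1[OF X] by (simp add: \<phi>_def)
    then have "1 - \<phi> < X / (exp X - 1)" using x1 by (simp add: pos_less_divide_eq mult.commute)
    then show ?thesis unfolding r1 by linarith
  qed
  moreover have "\<phi> < logmean a b / b - 1"
  proof -
    have "1 / X > 1 / (exp X - 1) * (1 + \<phi>)" using tangent_G1[OF X] by (simp add: \<phi>_def)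
    then have "(1 + \<phi>) / (exp X - 1) < 1 / X" by simp
    then have "1 + \<phi> < (exp X - 1) / X" using x1 X by (simp add: divide_less_eq field_simps)
    then show ?thesis unfolding r2 by linarith
  qed
  ultimately show ?thesis unfolding Iq by simp
qed



theorem theorem3p1:
  shows "(\<forall>a b c d p q :: real. a > b \<and> b \<ge> c \<and> c > d \<and> d > 0 \<and>
            p \<notin> {0, -1} \<and> q \<notin> {0, -1} \<longrightarrow>
            (let lhs = plogmean p a b powr p / plogmean p c d powr p;
                 rhs = plogmean q a b powr q / plogmean q c d powr q *
                   (1 + (p - q) / (q + 1) *
                     ln (identric (a powr (q + 1)) (b powr (q + 1)) /
                         identric (c powr (q + 1)) (d powr (q + 1))))
             in lhs \<ge> rhs \<and> (lhs = rhs \<longleftrightarrow> p = q)))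
       \<and> (\<forall>a b c d :: real. a > b \<and> b \<ge> c \<and> c > d \<and> d > 0 \<longrightarrow>
            exp (1 - logmean c d / logmean a b) < identric a b / identric c d \<and>
            identric a b / identric c d < exp (logmean a b / logmean c d - 1))
       \<and> (\<forall>a b :: real. a > b \<and> b > 0 \<longrightarrow>
            exp (1 - b / logmean a b) < identric a b / b \<and>
            identric a b / b < exp (logmean a b / b - 1))"
proof (intro conjI allI impI)
  fix a b c d p q :: real
  assume h: "a > b \<and> b \<ge> c \<and> c > d \<and> d > 0 \<and> p \<notin> {0, -1} \<and> q \<notin> {0, -1}"
  then show "let lhs = plogmean p a b powr p / plogmean p c d powr p;
                 rhs = plogmean q a b powr q / plogmean q c d powr q *
                   (1 + (p - q) / (q + 1) *
                     ln (identric (a powr (q + 1)) (b powr (q + 1)) /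
                         identric (c powr (q + 1)) (d powr (q + 1))))
             in lhs \<ge> rhs \<and> (lhs = rhs \<longleftrightarrow> p = q)"
    using part1[of b a c d p q] by blast
next
  fix a b c d :: real
  assume h: "a > b \<and> b \<ge> c \<and> c > d \<and> d > 0"
  then show "exp (1 - logmean c d / logmean a b) < identric a b / identric c d"
    using part2[of b a c d] by blast
next
  fix a b c d :: real
  assume h: "a > b \<and> b \<ge> c \<and> c > d \<and> d > 0"
  then show "identric a b / identric c d < exp (logmean a b / logmean c d - 1)"
    using part2[of b a c d] by blast
next
  fix a b :: real
  assume h: "a > b \<and> b > 0"
  then show "exp (1 - b / logmean a b) < identric a b / b"
    using part3[of b a] by blast
next
  fix a b :: real
  assume h: "a > b \<and> b > 0"
  then show "identric a b / b < exp (logmean a b / b - 1)"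
    using part3[of b a] by blast
qed

end
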